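(* For $n\ge 2$, $\mathscr{Z}^{\rm TAR}(K_n)\cong K_{1,n}$. Furthermore, $\overline{\operatorname{Z}}(K_n)=\operatorname{Z}(K_n)=n-1$ and $z_0(K_n)=\underline{z_0}(K_n)=n$.
   Context: Zero forcing on a graph $G$: starting with a set $S$ of blue vertices (others white), a blue vertex $v$ may change a white vertex $w$ to blue if $w$ is the only white neighbor of $v$. $S$ is a zero forcing set if repeated application colors all of $V(G)$ blue. $\operatorname{Z}(G)$ is the minimum size of a zero forcing set, $\overline{\operatorname{Z}}(G)$ the maximum size of a minimal (under inclusion) zero forcing set. $\mathscr{Z}^{\rm TAR}(G)$ has vertices the zero forcing sets of $G$, two adjacent iff their symmetric difference has size 1; $\mathscr{Z}^{\rm TAR}_k(G)$ is its subgraph induced by zero forcing sets of size at most $k$. $\underline{z_0}(G)$ is the least $k$ with $\mathscr{Z}^{\rm TAR}_k(G)$ connected; $z_0(G)$ is the least $k$ such that $\mathscr{Z}^{\rm TAR}_i(G)$ is connected for every $i=k,\dots,|V(G)|$. $K_{1,n}$ is the star with $n$ leaves. *)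

theory Defs
  imports Main
begin

text \<open>A (simple) graph is given by a vertex set V and a symmetric irreflexive
adjacency relation E.\<close>

text \<open>Set of vertices eventually coloured blue starting from S (least set closed
under the colour-change rule).\<close>
inductive_set zf_closure :: "'a set \<Rightarrow> ('a \<Rightarrow> 'a \<Rightarrow> bool) \<Rightarrow> 'a set \<Rightarrow> 'a set"
  for V E S where
  base: "x \<in> S \<Longrightarrow> x \<in> zf_closure V E S"
| force: "\<lbrakk> v \<in> zf_closure V E S; w \<in> V; E v w;
            \<forall>u\<in>V. E v u \<and> u \<noteq> w \<longrightarrow> u \<in> zf_closure V E S \<rbrakk>
          \<Longrightarrow> w \<in> zf_closure V E S"

definition zero_forcing_set :: "'a set \<Rightarrow> ('a \<Rightarrow> 'a \<Rightarrow> bool) \<Rightarrow> 'a set \<Rightarrow> bool" where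
  "zero_forcing_set V E S \<longleftrightarrow> S \<subseteq> V \<and> zf_closure V E S = V"

definition minimal_zero_forcing_set :: "'a set \<Rightarrow> ('a \<Rightarrow> 'a \<Rightarrow> bool) \<Rightarrow> 'a set \<Rightarrow> bool" where
  "minimal_zero_forcing_set V E S \<longleftrightarrow>
     zero_forcing_set V E S \<and> (\<forall>T. T \<subset> S \<longrightarrow> \<not> zero_forcing_set V E T)"

definition Z :: "'a set \<Rightarrow> ('a \<Rightarrow> 'a \<Rightarrow> bool) \<Rightarrow> nat" where
  "Z V E = Min {card S | S. zero_forcing_set V E S}"

definition Zbar :: "'a set \<Rightarrow> ('a \<Rightarrow> 'a \<Rightarrow> bool) \<Rightarrow> nat" where
  "Zbar V E = Max {card S | S. minimal_zero_forcing_set V E S}"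

definition tar_verts :: "'a set \<Rightarrow> ('a \<Rightarrow> 'a \<Rightarrow> bool) \<Rightarrow> 'a set set" where
  "tar_verts V E = {S. zero_forcing_set V E S}"

definition tar_adj :: "'a set \<Rightarrow> 'a set \<Rightarrow> bool" where
  "tar_adj S T \<longleftrightarrow> card ((S - T) \<union> (T - S)) = 1"

definition tar_k_verts :: "'a set \<Rightarrow> ('a \<Rightarrow> 'a \<Rightarrow> bool) \<Rightarrow> nat \<Rightarrow> 'a set set" where
  "tar_k_verts V E k = {S. zero_forcing_set V E S \<and> card S \<le> k}"

text \<open>Connectedness of the graph induced on W by adjacency R; the empty graph
is not connected (standard convention).\<close>
definition graph_connected :: "'b set \<Rightarrow> ('b \<Rightarrow> 'b \<Rightarrow> bool) \<Rightarrow> bool" where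
  "graph_connected W R \<longleftrightarrow> W \<noteq> {} \<and>
     (\<forall>x\<in>W. \<forall>y\<in>W. (x, y) \<in> {(a, b). a \<in> W \<and> b \<in> W \<and> R a b}\<^sup>*)"

definition z0_lower :: "'a set \<Rightarrow> ('a \<Rightarrow> 'a \<Rightarrow> bool) \<Rightarrow> nat" where
  "z0_lower V E = (LEAST k. graph_connected (tar_k_verts V E k) tar_adj)"

definition z0 :: "'a set \<Rightarrow> ('a \<Rightarrow> 'a \<Rightarrow> bool) \<Rightarrow> nat" where
  "z0 V E = (LEAST k. \<forall>i. k \<le> i \<and> i \<le> card V \<longrightarrow>
                         graph_connected (tar_k_verts V E i) tar_adj)"

definition graph_iso :: "'b set \<Rightarrow> ('b \<Rightarrow> 'b \<Rightarrow> bool) \<Rightarrow> 'c set \<Rightarrow> ('c \<Rightarrow> 'c \<Rightarrow> bool) \<Rightarrow> bool" where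
  "graph_iso V1 E1 V2 E2 \<longleftrightarrow>
     (\<exists>f. bij_betw f V1 V2 \<and> (\<forall>x\<in>V1. \<forall>y\<in>V1. E1 x y \<longleftrightarrow> E2 (f x) (f y)))"

definition complete_verts :: "nat \<Rightarrow> nat set" where
  "complete_verts n = {0..<n}"
definition complete_adj :: "nat \<Rightarrow> nat \<Rightarrow> bool" where
  "complete_adj x y \<longleftrightarrow> x \<noteq> y"

definition star_verts :: "nat \<Rightarrow> nat set" where
  "star_verts n = {0..n}"
definition star_adj :: "nat \<Rightarrow> nat \<Rightarrow> bool" where
  "star_adj x y \<longleftrightarrow> (x = 0 \<and> y \<noteq> 0) \<or> (y = 0 \<and> x \<noteq> 0)"

end

theory Submission
  imports Defs
begin

lemma closure_small:
  assumes "a \<in> V" "b \<in> V" "a \<notin> S" "b \<notin> S" "a \<noteq> b"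
  shows "x \<in> zf_closure V complete_adj S \<Longrightarrow> x \<in> S"
proof (induction rule: zf_closure.induct)
  case (base x) then show ?case .
next
  case (force v w)
  show ?case
  proof (rule ccontr)
    assume "w \<notin> S"
    obtain u where u: "u \<in> V" "u \<notin> S" "u \<noteq> w" using assms by blast
    have "u \<noteq> v" using u force by auto
    then have "u \<in> S" using force u by (auto simp: complete_adj_def)
    then show False using u by simp
  qed
qed

lemma closure_sub:
  assumes "S \<subseteq> V"
  shows "zf_closure V E S \<subseteq> V"
proof
  fix x assume "x \<in> zf_closure V E S"
  then show "x \<in> V"
  proof (induction rule: zf_closure.induct)
    case (base x) then show ?case using assms by blast
  next
    case (force v w) then show ?case by blast
  qed
qed

lemma zfs_iff:
  assumes "n \<ge> 2"
  shows "zero_forcing_set {0..<n} complete_adj S \<longleftrightarrow>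
    (S = {0..<n} \<or> (\<exists>i<n. S = {0..<n} - {i}))"
proof
  assume z: "zero_forcing_set {0..<n} complete_adj S"
  then have sub: "S \<subseteq> {0..<n}" and cl: "zf_closure {0..<n} complete_adj S = {0..<n}"
    by (auto simp: zero_forcing_set_def)
  show "S = {0..<n} \<or> (\<exists>i<n. S = {0..<n} - {i})"
  proof (rule ccontr)
    assume nc: "\<not> ?thesis"
    then obtain a where a: "a \<in> {0..<n}" "a \<notin> S" using sub by blast
    have ne: "S \<noteq> {0..<n} - {a}" using nc a by auto
    have "S \<subseteq> {0..<n} - {a}" using sub a by blast
    then obtain b where b: "b \<in> {0..<n}" "b \<notin> S" "a \<noteq> b"
      using ne by blast
    have "a \<in> S" using closure_small[OF a(1) b(1) a(2) b(2) b(3)] cl a by blast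
    then show False using a by simp
  qed
next
  assume h: "S = {0..<n} \<or> (\<exists>i<n. S = {0..<n} - {i})"
  then have sub: "S \<subseteq> {0..<n}" by blast
  have base: "S \<subseteq> zf_closure {0..<n} complete_adj S"
    by (auto intro: zf_closure.base)
  show "zero_forcing_set {0..<n} complete_adj S"
  proof (cases "S = {0..<n}")
    case True
    then show ?thesis using closure_sub[OF sub, of complete_adj] base sub
      unfolding zero_forcing_set_def by blast
  next
    case False
    then obtain i where i: "i < n" "S = {0..<n} - {i}" using h by blast
    define v where "v = (if i = 0 then 1 else (0::nat))"
    have v: "v < n" "v \<noteq> i" using assms by (auto simp: v_def)
    have "i \<in> zf_closure {0..<n} complete_adj S"
      apply (rule zf_closure.force[of v])
      using i v base by (auto simp: complete_adj_def)
    then have "{0..<n} \<subseteq> zf_closure {0..<n} complete_adj S"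
      using i base by blast
    then show ?thesis using closure_sub[OF sub, of complete_adj] sub
      unfolding zero_forcing_set_def by blast
  qed
qed


lemma iso_sym:
  assumes "bij_betw g A B" "\<forall>x\<in>A. \<forall>y\<in>A. R1 x y \<longleftrightarrow> R2 (g x) (g y)"
  shows "graph_iso B R2 A R1"
  unfolding graph_iso_def
proof (intro exI conjI ballI)
  show "bij_betw (inv_into A g) B A" using assms(1) by (rule bij_betw_inv_into)
  fix x y assume xy: "x \<in> B" "y \<in> B"
  have im: "g ` A = B" using assms(1) by (simp add: bij_betw_def)
  have fx: "inv_into A g x \<in> A" "inv_into A g y \<in> A" using xy im by (auto intro: inv_into_into)
  have gx: "g (inv_into A g x) = x" "g (inv_into A g y) = y" using xy im by (auto intro: f_inv_into_f)
  show "R2 x y \<longleftrightarrow> R1 (inv_into A g x) (inv_into A g y)"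
    using assms(2) fx gx by metis
qed

lemma tar_verts_eq:
  assumes "n \<ge> 2"
  shows "tar_verts {0..<n} complete_adj = insert {0..<n} ((\<lambda>i. {0..<n} - {i}) ` {0..<n})"
proof -
  have "\<And>S. S \<in> tar_verts {0..<n} complete_adj \<longleftrightarrow> S \<in> insert {0..<n} ((\<lambda>i. {0..<n} - {i}) ` {0..<n})"
    unfolding tar_verts_def mem_Collect_eq zfs_iff[OF assms] by auto
  then show ?thesis by blast
qed

lemma symdiff1: "i < n \<Longrightarrow> ({0..<n} - ({0..<n} - {i})) \<union> (({0..<n} - {i}) - {0..<n}) = {i::nat}"
  by auto
lemma symdiff1': "i < n \<Longrightarrow> (({0..<n} - {i}) - {0..<n}) \<union> ({0..<n} - ({0..<n} - {i})) = {i::nat}"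
  by auto
lemma symdiff2: "i < n \<Longrightarrow> j < n \<Longrightarrow> i \<noteq> j \<Longrightarrow>
   (({0..<n} - {i}) - ({0..<n} - {j})) \<union> (({0..<n} - {j}) - ({0..<n} - {i})) = {i::nat, j}"
  by auto

lemma adj_VV: "\<not> tar_adj (A::nat set) A" by (simp add: tar_adj_def)
lemma adj_V1: "i < n \<Longrightarrow> tar_adj {0..<n} ({0..<n} - {i::nat})"
  unfolding tar_adj_def using symdiff1 by simp
lemma adj_1V: "i < n \<Longrightarrow> tar_adj ({0..<n} - {i::nat}) {0..<n}"
  unfolding tar_adj_def using symdiff1' by simp
lemma adj_11: "i < n \<Longrightarrow> j < n \<Longrightarrow> \<not> tar_adj ({0..<n} - {i::nat}) ({0..<n} - {j})"
proof (cases "i = j")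
  case True then show ?thesis by (simp add: tar_adj_def)
next
  case False
  assume "i < n" "j < n"
  then show ?thesis unfolding tar_adj_def symdiff2[OF \<open>i < n\<close> \<open>j < n\<close> False] using False by simp
qed

lemma VneV1: "i < n \<Longrightarrow> {0..<n} \<noteq> {0..<n} - {i::nat}"
proof
  assume "i < n" "{0..<n} = {0..<n} - {i}"
  then have "i \<in> {0..<n} - {i}" by (metis atLeastLessThan_iff zero_le)
  then show False by blast
qed
lemma V1inj: "i < n \<Longrightarrow> j < n \<Longrightarrow> {0..<n} - {i::nat} = {0..<n} - {j} \<Longrightarrow> i = j"
proof (rule ccontr)
  assume "i < n" "j < n" "{0..<n} - {i::nat} = {0..<n} - {j}" "i \<noteq> j"
  then have "i \<in> {0..<n} - {j}" by simp
  then have "i \<in> {0..<n} - {i}" using \<open>{0..<n} - {i::nat} = {0..<n} - {j}\<close> by simp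
  then show False by blast
qed

lemma card_V1: "i < n \<Longrightarrow> card ({0..<n} - {i::nat}) = n - 1" by simp

lemma iso_part:
  assumes "n \<ge> 2"
  shows "graph_iso (tar_verts {0..<n} complete_adj) tar_adj {0..n} star_adj"
proof -
  define g where "g k = (if k = 0 then {0..<n} else {0..<n} - {k - 1})" for k :: nat
  have bij: "bij_betw g {0..n} (tar_verts {0..<n} complete_adj)"
    unfolding bij_betw_def
  proof
    show "inj_on g {0..n}"
    proof (rule inj_onI)
      fix x y assume xy: "x \<in> {0..n}" "y \<in> {0..n}" "g x = g y"
      have lt: "x - 1 < n" "y - 1 < n" using xy assms by auto
      show "x = y"
      proof (cases "x = 0"; cases "y = 0")
        assume "x = 0" "y \<noteq> 0" then show ?thesis using xy lt VneV1[of "y - 1" n] by (simp add: g_def)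
      next
        assume "x \<noteq> 0" "y = 0" then show ?thesis using xy lt VneV1[of "x - 1" n] by (simp add: g_def)
      next
        assume "x \<noteq> 0" "y \<noteq> 0" then show ?thesis using xy lt V1inj[of "x - 1" n "y - 1"] by (simp add: g_def)
      qed simp
    qed
    have "g ` {0..n} = insert {0..<n} ((\<lambda>i. {0..<n} - {i}) ` {0..<n})"
    proof
      show "g ` {0..n} \<subseteq> insert {0..<n} ((\<lambda>i. {0..<n} - {i}) ` {0..<n})"
        by (auto simp: g_def)
      show "insert {0..<n} ((\<lambda>i. {0..<n} - {i}) ` {0..<n}) \<subseteq> g ` {0..n}"
      proof
        fix A assume "A \<in> insert {0..<n} ((\<lambda>i. {0..<n} - {i}) ` {0..<n})"
        then consider "A = {0..<n}" | i where "i < n" "A = {0..<n} - {i}" by auto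
        then show "A \<in> g ` {0..n}"
        proof cases
          case 1 then show ?thesis by (force simp: g_def)
        next
          case 2 then have "A = g (Suc i)" by (simp add: g_def)
          then show ?thesis using 2 by force
        qed
      qed
    qed
    then show "g ` {0..n} = tar_verts {0..<n} complete_adj" using tar_verts_eq[OF assms] by simp
  qed
  have adj: "\<forall>x\<in>{0..n}. \<forall>y\<in>{0..n}. star_adj x y \<longleftrightarrow> tar_adj (g x) (g y)"
  proof (intro ballI)
    fix x y assume xy: "x \<in> {0..n}" "y \<in> {0..n}"
    have lt: "x - 1 < n" "y - 1 < n" using xy assms by auto
    show "star_adj x y \<longleftrightarrow> tar_adj (g x) (g y)"
    proof (cases "x = 0"; cases "y = 0")
      assume "x = 0" "y = 0" then show ?thesis by (simp add: g_def star_adj_def adj_VV)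
    next
      assume "x = 0" "y \<noteq> 0" then show ?thesis using xy lt adj_V1[of "y - 1" n] by (simp add: g_def star_adj_def)
    next
      assume "x \<noteq> 0" "y = 0" then show ?thesis using xy lt adj_1V[of "x - 1" n] by (simp add: g_def star_adj_def)
    next
      assume "x \<noteq> 0" "y \<noteq> 0" then show ?thesis using xy lt adj_11[of "x - 1" n "y - 1"] by (simp add: g_def star_adj_def)
    qed
  qed
  show ?thesis using iso_sym[OF bij adj] .
qed


lemma Z_part:
  assumes "n \<ge> 2"
  shows "Z {0..<n} complete_adj = n - 1"
proof -
  have "{card S | S. zero_forcing_set {0..<n} complete_adj S} = {n, n - 1}"
  proof
    show "{card S | S. zero_forcing_set {0..<n} complete_adj S} \<subseteq> {n, n - 1}"
    proof
      fix x assume "x \<in> {card S | S. zero_forcing_set {0..<n} complete_adj S}"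
      then obtain S where S: "x = card S" "zero_forcing_set {0..<n} complete_adj S" by blast
      then have "S = {0..<n} \<or> (\<exists>i<n. S = {0..<n} - {i})" using zfs_iff[OF assms] by blast
      then show "x \<in> {n, n - 1}"
      proof
        assume "S = {0..<n}" then show ?thesis using S by simp
      next
        assume "\<exists>i<n. S = {0..<n} - {i}"
        then obtain i where "i < n" "S = {0..<n} - {i}" by blast
        then show ?thesis using S card_V1 by simp
      qed
    qed
    have n0: "0 < n" using assms by simp
    have "zero_forcing_set {0..<n} complete_adj {0..<n}"
      "zero_forcing_set {0..<n} complete_adj ({0..<n} - {0})"
      unfolding zfs_iff[OF assms] using n0 by blast+
    moreover have "card {0..<n} = n" "card ({0..<n} - {0::nat}) = n - 1" using assms by auto
    ultimately show "{n, n - 1} \<subseteq> {card S | S. zero_forcing_set {0..<n} complete_adj S}"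
      by (metis (mono_tags, lifting) empty_subsetI insert_subset mem_Collect_eq)
  qed
  then show ?thesis unfolding Z_def using assms by simp
qed

lemma minimal_iff:
  assumes "n \<ge> 2"
  shows "minimal_zero_forcing_set {0..<n} complete_adj S \<longleftrightarrow> (\<exists>i<n. S = {0..<n} - {i})"
proof
  assume m: "minimal_zero_forcing_set {0..<n} complete_adj S"
  then have z: "S = {0..<n} \<or> (\<exists>i<n. S = {0..<n} - {i})"
    using zfs_iff[OF assms] by (simp add: minimal_zero_forcing_set_def)
  have n0: "0 < n" using assms by simp
  have z0: "zero_forcing_set {0..<n} complete_adj ({0..<n} - {0})"
    unfolding zfs_iff[OF assms] using n0 by blast
  have "S \<noteq> {0..<n}"
  proof
    assume "S = {0..<n}"
    moreover have "(0::nat) \<in> {0..<n}" using n0 by simp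
    ultimately have "{0..<n} - {0} \<subset> S" by blast
    then show False using m z0 by (simp add: minimal_zero_forcing_set_def)
  qed
  then show "\<exists>i<n. S = {0..<n} - {i}" using z by blast
next
  assume "\<exists>i<n. S = {0..<n} - {i}"
  then obtain i where i: "i < n" "S = {0..<n} - {i}" by blast
  have "zero_forcing_set {0..<n} complete_adj S" using zfs_iff[OF assms] i by blast
  moreover have "\<not> zero_forcing_set {0..<n} complete_adj T" if "T \<subset> S" for T
  proof
    assume "zero_forcing_set {0..<n} complete_adj T"
    then have "T = {0..<n} \<or> (\<exists>j<n. T = {0..<n} - {j})" using zfs_iff[OF assms] by blast
    then show False
    proof
      assume "T = {0..<n}" then show False using that i by blast
    next
      assume "\<exists>j<n. T = {0..<n} - {j}"
      then obtain j where j: "j < n" "T = {0..<n} - {j}" by blast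
      have "i \<notin> T" using that i by blast
      then have "i = j" using i j by simp
      then show False using that i j by blast
    qed
  qed
  ultimately show "minimal_zero_forcing_set {0..<n} complete_adj S"
    by (simp add: minimal_zero_forcing_set_def)
qed

lemma Zbar_part:
  assumes "n \<ge> 2"
  shows "Zbar {0..<n} complete_adj = n - 1"
proof -
  have "{card S | S. minimal_zero_forcing_set {0..<n} complete_adj S} = {n - 1}"
  proof
    show "{card S | S. minimal_zero_forcing_set {0..<n} complete_adj S} \<subseteq> {n - 1}"
    proof
      fix x assume "x \<in> {card S | S. minimal_zero_forcing_set {0..<n} complete_adj S}"
      then obtain S where S: "x = card S" "minimal_zero_forcing_set {0..<n} complete_adj S" by blast
      then obtain i where "i < n" "S = {0..<n} - {i}" using minimal_iff[OF assms] by blast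
      then show "x \<in> {n - 1}" using S card_V1 by simp
    qed
    have n0: "0 < n" using assms by simp
    have "minimal_zero_forcing_set {0..<n} complete_adj ({0..<n} - {0})"
      unfolding minimal_iff[OF assms] using n0 by blast
    moreover have "card ({0..<n} - {0::nat}) = n - 1" using assms by auto
    ultimately show "{n - 1} \<subseteq> {card S | S. minimal_zero_forcing_set {0..<n} complete_adj S}"
      by (metis (mono_tags, lifting) empty_subsetI insert_subset mem_Collect_eq)
  qed
  then show ?thesis unfolding Zbar_def by simp
qed

lemma conn_big:
  assumes "n \<ge> 2" "k \<ge> n"
  shows "graph_connected (tar_k_verts {0..<n} complete_adj k) tar_adj"
proof -
  have W: "tar_k_verts {0..<n} complete_adj k = insert {0..<n} ((\<lambda>i. {0..<n} - {i}) ` {0..<n})"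
  proof -
    have "tar_k_verts {0..<n} complete_adj k = tar_verts {0..<n} complete_adj"
      unfolding tar_k_verts_def tar_verts_def
    proof (intro Collect_cong iffI conjI)
      fix S assume "zero_forcing_set {0..<n} complete_adj S"
      then have "S \<subseteq> {0..<n}" by (simp add: zero_forcing_set_def)
      then have "card S \<le> n" using card_mono[of "{0..<n}" S] by simp
      then show "card S \<le> k" using assms by simp
    qed auto
    then show ?thesis using tar_verts_eq[OF assms(1)] by simp
  qed
  define W where "W = insert {0..<n} ((\<lambda>i. {0..<n} - {i}) ` {0..<n})"
  define R where "R = {(a, b). a \<in> W \<and> b \<in> W \<and> tar_adj a b}"
  have toV: "(x, {0..<n}) \<in> R\<^sup>*" if "x \<in> W" for x
  proof (cases "x = {0..<n}")
    case False
    have "x \<in> (\<lambda>i. {0..<n} - {i}) ` {0..<n}" using that False unfolding W_def by blast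
    then obtain i where "i < n" "x = {0..<n} - {i}" by auto
    then have "(x, {0..<n}) \<in> R" using adj_1V by (auto simp: R_def W_def)
    then show ?thesis by blast
  qed simp
  have fromV: "({0..<n}, x) \<in> R\<^sup>*" if "x \<in> W" for x
  proof (cases "x = {0..<n}")
    case False
    have "x \<in> (\<lambda>i. {0..<n} - {i}) ` {0..<n}" using that False unfolding W_def by blast
    then obtain i where "i < n" "x = {0..<n} - {i}" by auto
    then have "({0..<n}, x) \<in> R" using adj_V1 by (auto simp: R_def W_def)
    then show ?thesis by blast
  qed simp
  have "\<forall>x\<in>W. \<forall>y\<in>W. (x, y) \<in> R\<^sup>*"
    using toV fromV by (meson rtrancl_trans)
  then show ?thesis unfolding graph_connected_def W R_def W_def by blast
qed

lemma not_conn_small: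
  assumes "n \<ge> 2" "k < n"
  shows "\<not> graph_connected (tar_k_verts {0..<n} complete_adj k) tar_adj"
proof
  assume c: "graph_connected (tar_k_verts {0..<n} complete_adj k) tar_adj"
  define W where "W = tar_k_verts {0..<n} complete_adj k"
  have Wsub: "W \<subseteq> (\<lambda>i. {0..<n} - {i}) ` {0..<n}"
  proof
    fix S assume "S \<in> W"
    then have "zero_forcing_set {0..<n} complete_adj S" "card S \<le> k" by (auto simp: W_def tar_k_verts_def)
    then have d: "S = {0..<n} \<or> (\<exists>i<n. S = {0..<n} - {i})" and cS: "card S < n"
      using zfs_iff[OF assms(1)] assms by (blast, linarith)
    have "S \<noteq> {0..<n}"
    proof
      assume "S = {0..<n}"
      then have "card S = n" by simp
      then show False using cS by simp
    qed
    then obtain i where "i < n" "S = {0..<n} - {i}" using d by blast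
    then show "S \<in> (\<lambda>i. {0..<n} - {i}) ` {0..<n}" by simp
  qed
  have "W \<noteq> {}" using c unfolding W_def graph_connected_def by blast
  then obtain S where "S \<in> W" by blast
  then have "S \<in> (\<lambda>i. {0..<n} - {i}) ` {0..<n}" using Wsub by (rule subsetD[rotated])
  then obtain i where i0: "i \<in> {0..<n}" "S = {0..<n} - {i}" by (rule imageE)
  then have i: "i < n" "S = {0..<n} - {i}" by simp_all
  have "card S \<le> k" using \<open>S \<in> W\<close> by (auto simp: W_def tar_k_verts_def)
  then have kk: "n - 1 \<le> k" using i card_V1 by simp
  have n01: "0 < n" "1 < n" using assms by auto
  have z01: "zero_forcing_set {0..<n} complete_adj ({0..<n} - {0})"
     "zero_forcing_set {0..<n} complete_adj ({0..<n} - {1})"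
    unfolding zfs_iff[OF assms(1)] using n01 by blast+
  have in0: "{0..<n} - {0} \<in> W" "{0..<n} - {1} \<in> W"
    unfolding W_def tar_k_verts_def mem_Collect_eq
    using z01 kk card_V1[OF n01(1)] card_V1[OF n01(2)] by simp_all
  have ne: "{0..<n} - {0::nat} \<noteq> {0..<n} - {1}" using V1inj[of 0 n 1] assms by auto
  have na: "\<not> tar_adj a b" if "a \<in> W" "b \<in> W" for a b
  proof -
    have "a \<in> (\<lambda>i. {0..<n} - {i}) ` {0..<n}" using that(1) Wsub by (rule subsetD[rotated])
    then obtain i where "i \<in> {0..<n}" "a = {0..<n} - {i}" by (rule imageE)
    moreover have "b \<in> (\<lambda>i. {0..<n} - {i}) ` {0..<n}" using that(2) Wsub by (rule subsetD[rotated])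
    then obtain j where "j \<in> {0..<n}" "b = {0..<n} - {j}" by (rule imageE)
    ultimately have "i \<in> {0..<n}" "j \<in> {0..<n}" "a = {0..<n} - {i}" "b = {0..<n} - {j}" by blast+
    then show ?thesis using adj_11[of i n j] by simp
  qed
  have R: "{(a, b). a \<in> W \<and> b \<in> W \<and> tar_adj a b} = {}"
    using na by blast
  have "({0..<n} - {0}, {0..<n} - {1}) \<in> {(a, b). a \<in> W \<and> b \<in> W \<and> tar_adj a b}\<^sup>*"
    using c in0 unfolding graph_connected_def W_def by blast
  then show False using R ne by simp
qed

theorem proposition1p4:
  fixes n :: nat
  assumes "n \<ge> 2"
  shows "graph_iso (tar_verts (complete_verts n) complete_adj) tar_adj (star_verts n) star_adj
       \<and> Zbar (complete_verts n) complete_adj = n - 1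
       \<and> Z (complete_verts n) complete_adj = n - 1
       \<and> z0 (complete_verts n) complete_adj = n
       \<and> z0_lower (complete_verts n) complete_adj = n"
proof (intro conjI)
  show "graph_iso (tar_verts (complete_verts n) complete_adj) tar_adj (star_verts n) star_adj"
    using iso_part[OF assms] by (simp add: complete_verts_def star_verts_def)
  show "Zbar (complete_verts n) complete_adj = n - 1"
    using Zbar_part[OF assms] by (simp add: complete_verts_def)
  show "Z (complete_verts n) complete_adj = n - 1"
    using Z_part[OF assms] by (simp add: complete_verts_def)
  show "z0 (complete_verts n) complete_adj = n"
    unfolding z0_def complete_verts_def
  proof (rule Least_equality)
    show "\<forall>i. n \<le> i \<and> i \<le> card {0..<n} \<longrightarrow> graph_connected (tar_k_verts {0..<n} complete_adj i) tar_adj"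
      using conn_big[OF assms] by blast
    fix k assume h: "\<forall>i. k \<le> i \<and> i \<le> card {0..<n} \<longrightarrow> graph_connected (tar_k_verts {0..<n} complete_adj i) tar_adj"
    show "n \<le> k"
    proof (rule ccontr)
      assume "\<not> n \<le> k"
      then have "k \<le> n - 1" "n - 1 \<le> card {0..<n}" by auto
      then have "graph_connected (tar_k_verts {0..<n} complete_adj (n - 1)) tar_adj" using h by blast
      moreover have "n - 1 < n" using assms by simp
      ultimately show False using not_conn_small[OF assms] by blast
    qed
  qed
  show "z0_lower (complete_verts n) complete_adj = n"
    unfolding z0_lower_def complete_verts_def
  proof (rule Least_equality)
    show "graph_connected (tar_k_verts {0..<n} complete_adj n) tar_adj"
      using conn_big[OF assms] by blast
    fix k assume "graph_connected (tar_k_verts {0..<n} complete_adj k) tar_adj"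
    then show "n \<le> k" using not_conn_small[OF assms] by (meson not_le)
  qed
qed

end
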